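(* Fix an observation direction $\hat{\mathbf{x}}_0\in\mathbb{S}^2$ and choose $\mathbf{q}_0\in\mathbb{S}^2$ with $\mathbf{q}_0\cdot\hat{\mathbf{x}}_0\neq 0$; set $\mathbf{l}:=\frac{\hat{\mathbf{x}}_0\times \mathbf{q}_0}{|\hat{\mathbf{x}}_0\times \mathbf{q}_0|}$ and $\mathbf{m}:=\hat{\mathbf{x}}_0\times\mathbf{l}$. Let $\mathbf{e}\in\{\mathbf{l},\mathbf{m}\}$. If the set $$\{\alpha\in\mathbb{R}\;|\;\Pi_\alpha\subset S(\hat{\mathbf{x}}_0;\mathbf{J}),\ \hat{\mathbf{J}}_{\mathbf{e}}(\alpha)=0\}$$ has Lebesgue measure zero, then the strip $S(\hat{\mathbf{x}}_0;\mathbf{J})$ of the source support $D$ is uniquely determined by the data $\mathbf{e}\cdot\mathbf{E}^{\infty}(\hat{\mathbf{x}}_0,k;\mathbf{J})$ for all $k\in K$ at the single observation direction $\hat{\mathbf{x}}_0$.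
   Context: Time-harmonic Maxwell equations in $\mathbb{R}^3$ with constant $\epsilon,\mu>0$, zero conductivity: $\mathrm{curl}\,\mathbf{E}-i\omega\mu\mathbf{H}=0$, $\mathrm{curl}\,\mathbf{H}+i\omega\epsilon\mathbf{E}=\mathbf{J}$, with the Silver–Müller radiation condition; $k=\omega\sqrt{\epsilon\mu}$ ranges over $K=(k_{min},k_{max})$ with $0<k_{min}<k_{max}$. The source $\mathbf{J}\in(L^\infty(\mathbb{R}^3))^3$ has compact support in a bounded Lipschitz domain $D$ with connected complement. The electric far field pattern is $\mathbf{E}^{\infty}(\hat{\mathbf{x}},k;\mathbf{J})=i\omega\mu(\mathbb{I}-\hat{\mathbf{x}}\hat{\mathbf{x}}^{T})\int_{\mathbb{R}^3}e^{-ik\hat{\mathbf{x}}\cdot\mathbf{y}}\mathbf{J}(\mathbf{y})\,d\mathbf{y}$. The $\hat{\mathbf{x}}$-strip hull of $D$ is $S(\hat{\mathbf{x}};\mathbf{J}):=\{\mathbf{y}\in\mathbb{R}^3:\inf_{\mathbf{z}\in D}\mathbf{z}\cdot\hat{\mathbf{x}}\le\mathbf{y}\cdot\hat{\mathbf{x}}\le\sup_{\mathbf{z}\in D}\mathbf{z}\cdot\hat{\mathbf{x}}\}$, the smallest strip with normals $\pm\hat{\mathbf{x}}$ containing $\overline{D}$. For $\alpha\in\mathbb{R}$, $\Pi_\alpha:=\{\mathbf{y}\in\mathbb{R}^3:\mathbf{y}\cdot\hat{\mathbf{x}}_0+\alpha=0\}$ and $\hat{\mathbf{J}}_{\mathbf{e}}(\alpha):=\int_{\Pi_\alpha}\mathbf{e}\cdot\mathbf{J}(\mathbf{y})\,ds(\mathbf{y})$.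 *)

theory Defs
  imports "HOL-Analysis.Analysis"
begin

definition local_coords :: "real^3 \<Rightarrow> real^3^3 \<Rightarrow> real^2 \<Rightarrow> real \<Rightarrow> real^3" where
  "local_coords p Q u t = p + Q *v (\<chi> i. if i = 1 then u$1 else if i = 2 then u$2 else t)"

definition lipschitz_domain :: "(real^3) set \<Rightarrow> bool" where
  "lipschitz_domain D \<longleftrightarrow> open D \<and> bounded D \<and> connected D \<and> D \<noteq> {} \<and>
     (\<forall>p\<in>frontier D. \<exists>Q::real^3^3. \<exists>r>0. \<exists>h>0. \<exists>(g::real^2 \<Rightarrow> real) L.
        orthogonal_matrix Q \<and> L-lipschitz_on UNIV g \<and> g 0 = 0 \<and>
        (\<forall>u. norm u < r \<longrightarrow> \<bar>g u\<bar> < h) \<and>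
        (\<forall>u t. norm u < r \<and> \<bar>t\<bar> < h \<longrightarrow> (local_coords p Q u t \<in> D \<longleftrightarrow> t < g u)))"

text \<open>Electric far field pattern; omega = k / sqrt(eps*mu).\<close>
definition far_field :: "real \<Rightarrow> real \<Rightarrow> real^3 \<Rightarrow> real \<Rightarrow> (real^3 \<Rightarrow> complex^3) \<Rightarrow> complex^3" where
  "far_field eps mu x k J =
     (\<chi> i. \<i> * complex_of_real (k / sqrt (eps * mu)) * complex_of_real mu *
        (\<Sum>j\<in>UNIV. complex_of_real ((if i = j then 1 else 0) - x$i * x$j) *
           (LINT y|lborel. exp (- \<i> * complex_of_real (k * (x \<bullet> y))) * (J y $ j))))"

definition cdot :: "real^3 \<Rightarrow> complex^3 \<Rightarrow> complex" where
  "cdot e v = (\<Sum>i\<in>UNIV. complex_of_real (e$i) * v$i)"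

definition strip_hull :: "real^3 \<Rightarrow> (real^3) set \<Rightarrow> (real^3) set" where
  "strip_hull x D = {y. (INF z\<in>D. z \<bullet> x) \<le> y \<bullet> x \<and> y \<bullet> x \<le> (SUP z\<in>D. z \<bullet> x)}"

definition plane :: "real^3 \<Rightarrow> real \<Rightarrow> (real^3) set" where
  "plane x \<alpha> = {y. y \<bullet> x + \<alpha> = 0}"

text \<open>Surface integral over the plane Pi_alpha = {y. y.x0 + alpha = 0}, parametrised isometrically
  by y = -alpha x0 + u1 b1 + u2 b2 with (x0,b1,b2) orthonormal (surface measure = Lebesgue
  measure on R^2).\<close>
definition plane_integral :: "real^3 \<Rightarrow> real^3 \<Rightarrow> real^3 \<Rightarrow> real \<Rightarrow> (real^3 \<Rightarrow> complex) \<Rightarrow> complex" where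
  "plane_integral x b1 b2 \<alpha> f =
     (LINT u|(lborel :: (real^2) measure). f ((- \<alpha>) *\<^sub>R x + (u$1) *\<^sub>R b1 + (u$2) *\<^sub>R b2))"

definition J_hat :: "real^3 \<Rightarrow> real^3 \<Rightarrow> real^3 \<Rightarrow> real^3 \<Rightarrow> (real^3 \<Rightarrow> complex^3) \<Rightarrow> real \<Rightarrow> complex" where
  "J_hat x b1 b2 e J \<alpha> = plane_integral x b1 b2 \<alpha> (\<lambda>y. cdot e (J y))"

definition admissible_source :: "(real^3 \<Rightarrow> complex^3) \<Rightarrow> (real^3) set \<Rightarrow> bool" where
  "admissible_source J D \<longleftrightarrow> lipschitz_domain D \<and> connected (UNIV - closure D) \<and>
     J \<in> borel_measurable lborel \<and> (\<exists>B. AE y in lborel. norm (J y) \<le> B) \<and>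
     (\<forall>y. y \<notin> D \<longrightarrow> J y = 0)"

end

theory Submission
  imports Defs "HOL-Probability.Levy" "HOL-Complex_Analysis.Conformal_Mappings"
begin

lemma real_fourier_zero:
  fixes A :: "real \<Rightarrow> real"
  assumes intA: "integrable lborel A"
    and F0: "\<And>k. (CLINT t|lborel. iexp (k * t) * complex_of_real (A t)) = 0"
  shows "AE t in lborel. A t = 0"
proof -
  define P where "P t = max (A t) 0" for t
  define N where "N t = max (- A t) 0" for t
  have [measurable]: "A \<in> borel_measurable lborel" using intA by auto
  have [measurable]: "P \<in> borel_measurable lborel" "N \<in> borel_measurable lborel"
    unfolding P_def[abs_def] N_def[abs_def] by measurable
  have intP: "integrable lborel P" unfolding P_def by (auto intro!: integrable_max intA)
  have intN: "integrable lborel N" unfolding N_def by (auto intro!: integrable_max intA)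
  have AeqPN: "A t = P t - N t" for t unfolding P_def N_def by auto
  have Pnn: "P t \<ge> 0" "N t \<ge> 0" for t unfolding P_def N_def by auto
  have PN0: "P t = 0 \<or> N t = 0" for t unfolding P_def N_def by auto
  have intPc: "integrable lborel (\<lambda>t. iexp (k * t) * complex_of_real (P t))" for k
    by (rule Bochner_Integration.integrable_bound[where f="\<lambda>t. P t"]) (auto intro!: intP simp: norm_mult Pnn)
  have intNc: "integrable lborel (\<lambda>t. iexp (k * t) * complex_of_real (N t))" for k
    by (rule Bochner_Integration.integrable_bound[where f="\<lambda>t. N t"]) (auto intro!: intN simp: norm_mult Pnn)
  have eqPN: "(CLINT t|lborel. iexp (k * t) * complex_of_real (P t)) = (CLINT t|lborel. iexp (k * t) * complex_of_real (N t))" for k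
  proof -
    have "(CLINT t|lborel. iexp (k * t) * complex_of_real (P t)) - (CLINT t|lborel. iexp (k * t) * complex_of_real (N t))
       = (CLINT t|lborel. iexp (k * t) * complex_of_real (A t))"
      by (subst Bochner_Integration.integral_diff[symmetric, OF intPc intNc]) (simp add: AeqPN algebra_simps)
    then show ?thesis using F0[of k] by simp
  qed
  have "(CLINT t|lborel. iexp (0 * t) * complex_of_real (P t)) = complex_of_real (integral\<^sup>L lborel P)"
    by simp
  define p where "p = integral\<^sup>L lborel P"
  have pN: "p = integral\<^sup>L lborel N"
    using eqPN[of 0] unfolding p_def by simp
  have p0: "p \<ge> 0" unfolding p_def by (rule Bochner_Integration.integral_nonneg) (simp add: Pnn)
  show ?thesis
  proof (cases "p = 0")
    case True
    have "AE t in lborel. P t = 0"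
      using True Pnn unfolding p_def by (subst integral_nonneg_eq_0_iff_AE[symmetric]) (auto intro: intP)
    moreover have "AE t in lborel. N t = 0"
      using True Pnn unfolding pN by (subst integral_nonneg_eq_0_iff_AE[symmetric]) (auto intro: intN)
    ultimately show ?thesis by eventually_elim (simp add: AeqPN)
  next
    case False
    then have ppos: "p > 0" using p0 by simp
    define MP where "MP = density lborel (\<lambda>t. ennreal (P t / p))"
    define MN where "MN = density lborel (\<lambda>t. ennreal (N t / p))"
    have distP: "real_distribution MP"
    proof -
      have "emeasure MP UNIV = (\<integral>\<^sup>+ t. ennreal (P t / p) \<partial>lborel)"
        unfolding MP_def by (subst emeasure_density) auto
      also have "\<dots> = ennreal (integral\<^sup>L lborel (\<lambda>t. P t / p))"
        by (rule nn_integral_eq_integral) (use intP ppos Pnn in auto)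
      also have "\<dots> = 1" using ppos by (simp add: p_def)
      finally show ?thesis unfolding MP_def
        by (intro real_distribution.intro prob_spaceI real_distribution_axioms.intro) (auto simp: MP_def)
    qed
    have distN: "real_distribution MN"
    proof -
      have "emeasure MN UNIV = (\<integral>\<^sup>+ t. ennreal (N t / p) \<partial>lborel)"
        unfolding MN_def by (subst emeasure_density) auto
      also have "\<dots> = ennreal (integral\<^sup>L lborel (\<lambda>t. N t / p))"
        by (rule nn_integral_eq_integral) (use intN ppos Pnn in auto)
      also have "\<dots> = 1" using ppos by (simp add: pN)
      finally show ?thesis unfolding MN_def
        by (intro real_distribution.intro prob_spaceI real_distribution_axioms.intro) (auto simp: MN_def)
    qed
    have charP: "char MP k = (CLINT t|lborel. iexp (k * t) * complex_of_real (P t)) / p" for k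
    proof -
      have "char MP k = (CLINT t|lborel. (P t / p) *\<^sub>R iexp (k * t))"
        unfolding char_def MP_def using ppos Pnn by (subst integral_density) auto
      also have "\<dots> = (CLINT t|lborel. (iexp (k * t) * complex_of_real (P t)) / p)"
        by (simp add: scaleR_conv_of_real field_simps)
      finally show ?thesis by simp
    qed
    have charN: "char MN k = (CLINT t|lborel. iexp (k * t) * complex_of_real (N t)) / p" for k
    proof -
      have "char MN k = (CLINT t|lborel. (N t / p) *\<^sub>R iexp (k * t))"
        unfolding char_def MN_def using ppos Pnn by (subst integral_density) auto
      also have "\<dots> = (CLINT t|lborel. (iexp (k * t) * complex_of_real (N t)) / p)"
        by (simp add: scaleR_conv_of_real field_simps)
      finally show ?thesis by simp
    qed
    have "MP = MN"
      by (rule Levy_uniqueness[OF distP distN]) (simp only: fun_eq_iff charP charN eqPN, simp)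
    then have "AE t in lborel. ennreal (P t / p) = ennreal (N t / p)"
      unfolding MP_def MN_def by (subst (asm) sigma_finite_measure.density_unique_iff[OF sigma_finite_lborel]) auto
    then show ?thesis
    proof eventually_elim
      case (elim t)
      then have "P t = N t" using ppos Pnn by (simp add: ennreal_inj divide_right_mono)
      then show ?case using PN0[of t] by (simp add: AeqPN)
    qed
  qed
qed


lemma norm_exp_mi: "norm (exp (- \<i> * complex_of_real x)) = 1"
  by (simp add: norm_exp_eq_Re)

lemma complex_fourier_zero:
  fixes H :: "real \<Rightarrow> complex"
  assumes intH: "integrable lborel H"
    and F0: "\<And>k. (CLINT t|lborel. exp (- \<i> * complex_of_real (k * t)) * H t) = 0"
  shows "AE t in lborel. H t = 0"
proof -
  have [measurable]: "H \<in> borel_measurable lborel" using intH by auto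
  define F where "F k = (CLINT t|lborel. exp (- \<i> * complex_of_real (k * t)) * H t)" for k
  have Fz: "F k = 0" for k using F0 unfolding F_def .
  have intE: "integrable lborel (\<lambda>t. exp (- \<i> * complex_of_real (k * t)) * H t)" for k
    by (rule Bochner_Integration.integrable_bound[where f=H]) (auto simp: norm_mult norm_exp_mi intH)
  have intEc: "integrable lborel (\<lambda>t. cnj (exp (- \<i> * complex_of_real (k * t)) * H t))" for k
    using intE[of k] by (rule integrable_cnj)
  have ReF: "(CLINT t|lborel. iexp (k * t) * complex_of_real (Re (H t))) = 0" for k
  proof -
    have pw: "iexp (k * t) * complex_of_real (Re (H t)) =
       (exp (- \<i> * complex_of_real ((-k) * t)) * H t + cnj (exp (- \<i> * complex_of_real (k * t)) * H t)) / 2" for t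
    proof -
      have "cnj (exp (- \<i> * complex_of_real (k * t)) * H t) = iexp (k * t) * cnj (H t)"
        by (simp add: exp_cnj)
      moreover have "exp (- \<i> * complex_of_real ((-k) * t)) = iexp (k * t)" by simp
      moreover have "complex_of_real (Re (H t)) = (H t + cnj (H t)) / 2"
        by (simp add: complex_add_cnj)
      ultimately show ?thesis
        by (simp only:) (simp add: field_simps)
    qed
    have "(CLINT t|lborel. iexp (k * t) * complex_of_real (Re (H t)))
        = (CLINT t|lborel. (exp (- \<i> * complex_of_real ((-k) * t)) * H t + cnj (exp (- \<i> * complex_of_real (k * t)) * H t)) / 2)"
      by (simp only: pw)
    also have "\<dots> = (F (-k) + cnj (F k)) / 2"
      unfolding F_def
      by (subst integral_divide_zero, subst Bochner_Integration.integral_add[OF intE intEc]) (simp only: Bochner_Integration.integral_cnj[of lborel "\<lambda>t. exp (- \<i> * complex_of_real (k * t)) * H t"])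
    finally show ?thesis by (simp add: Fz)
  qed
  have ImF: "(CLINT t|lborel. iexp (k * t) * complex_of_real (Im (H t))) = 0" for k
  proof -
    have pw: "iexp (k * t) * complex_of_real (Im (H t)) =
       (exp (- \<i> * complex_of_real ((-k) * t)) * H t - cnj (exp (- \<i> * complex_of_real (k * t)) * H t)) / (2 * \<i>)" for t
    proof -
      have "cnj (exp (- \<i> * complex_of_real (k * t)) * H t) = iexp (k * t) * cnj (H t)"
        by (simp add: exp_cnj)
      moreover have "exp (- \<i> * complex_of_real ((-k) * t)) = iexp (k * t)" by simp
      moreover have "complex_of_real (Im (H t)) = (H t - cnj (H t)) / (2 * \<i>)"
        by (simp add: complex_eq_iff)
      ultimately show ?thesis
        by (simp only:) (simp add: field_simps)
    qed
    have "(CLINT t|lborel. iexp (k * t) * complex_of_real (Im (H t)))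
        = (CLINT t|lborel. (exp (- \<i> * complex_of_real ((-k) * t)) * H t - cnj (exp (- \<i> * complex_of_real (k * t)) * H t)) / (2 * \<i>))"
      by (simp only: pw)
    also have "\<dots> = (F (-k) - cnj (F k)) / (2 * \<i>)"
      unfolding F_def
      by (subst integral_divide_zero, subst Bochner_Integration.integral_diff[OF intE intEc]) (simp only: Bochner_Integration.integral_cnj[of lborel "\<lambda>t. exp (- \<i> * complex_of_real (k * t)) * H t"])
    finally show ?thesis by (simp add: Fz)
  qed
  have "AE t in lborel. Re (H t) = 0"
    by (rule real_fourier_zero) (use intH ReF in auto)
  moreover have "AE t in lborel. Im (H t) = 0"
    by (rule real_fourier_zero) (use intH ImF in auto)
  ultimately show ?thesis by eventually_elim (simp add: complex_eq_iff)
qed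


lemma prod_Basis_cart: "(\<Prod>b\<in>Basis. (x::real^'n) \<bullet> b) = (\<Prod>i\<in>UNIV. x $ i)"
proof -
  have B: "Basis = (\<lambda>i. axis i (1::real)) ` (UNIV :: 'n set)"
    by (auto simp: Basis_vec_def)
  have I: "inj_on (\<lambda>i. axis i (1::real)) (UNIV :: 'n set)"
    by (auto intro!: inj_onI simp: axis_eq_axis)
  show ?thesis unfolding B by (subst prod.reindex[OF I]) (simp add: inner_axis)
qed

definition psi3 :: "real \<times> (real^2) \<Rightarrow> real^3" where
  "psi3 p = (\<chi> i. if i = 1 then fst p else if i = 2 then snd p $ 1 else snd p $ 2)"

lemma continuous_psi3: "continuous_on UNIV psi3"
  unfolding psi3_def
proof (intro continuous_on_vec_lambda)
  fix i :: 3
  show "continuous_on UNIV (\<lambda>x::real \<times> (real^2). if i = 1 then fst x else if i = 2 then snd x $ 1 else snd x $ 2)"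
    by (cases "i = 1"; cases "i = 2") (auto intro!: continuous_intros)
qed

lemma psi3_measurable[measurable]: "psi3 \<in> borel_measurable (lborel \<Otimes>\<^sub>M lborel)"
proof -
  have "psi3 \<in> borel_measurable borel"
    using continuous_psi3 by (rule borel_measurable_continuous_onI)
  then show ?thesis by (simp add: lborel_prod measurable_lborel1)
qed

lemma distr_psi3: "distr (lborel \<Otimes>\<^sub>M lborel) borel psi3 = lborel"
proof (rule lborel_eqI[symmetric])
  fix l u :: "real^3"
  assume lu: "\<And>b. b \<in> Basis \<Longrightarrow> l \<bullet> b \<le> u \<bullet> b"
  have luc: "l $ i \<le> u $ i" for i
    using lu[of "axis i 1"] by (simp add: inner_axis)
  define l' :: "real^2" where "l' = (\<chi> j. if j = 1 then l $ 2 else l $ 3)"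
  define u' :: "real^2" where "u' = (\<chi> j. if j = 1 then u $ 2 else u $ 3)"
  have pre: "psi3 -` box l u \<inter> space (lborel \<Otimes>\<^sub>M lborel) = {l$1<..<u$1} \<times> box l' u'"
  proof (rule set_eqI)
    fix p :: "real \<times> (real^2)"
    obtain a v where p: "p = (a, v)" by (cases p)
    show "p \<in> psi3 -` box l u \<inter> space (lborel \<Otimes>\<^sub>M lborel) \<longleftrightarrow> p \<in> {l$1<..<u$1} \<times> box l' u'"
      unfolding p by (simp add: psi3_def mem_box_cart forall_3 l'_def u'_def space_pair_measure forall_2)
  qed
  have "emeasure (distr (lborel \<Otimes>\<^sub>M lborel) borel psi3) (box l u)
      = emeasure (lborel \<Otimes>\<^sub>M lborel) ({l$1<..<u$1} \<times> box l' u')"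
    by (subst emeasure_distr) (auto simp: pre)
  also have "\<dots> = emeasure lborel {l$1<..<u$1} * emeasure lborel (box l' u')"
    by (rule lborel.emeasure_pair_measure_Times) auto
  also have "\<dots> = ennreal (u$1 - l$1) * ennreal ((u$2 - l$2) * (u$3 - l$3))"
  proof -
    have e1: "emeasure lborel {l$1<..<u$1} = ennreal (u$1 - l$1)"
      using luc[of 1] by (rule emeasure_lborel_Ioo)
    have le: "\<forall>b\<in>Basis. l' \<bullet> b \<le> u' \<bullet> b"
    proof
      fix b :: "real^2" assume "b \<in> Basis"
      then obtain i where b: "b = axis i 1" by (auto simp: Basis_vec_def)
      show "l' \<bullet> b \<le> u' \<bullet> b" unfolding b inner_axis
        using luc[of 2] luc[of 3] by (simp add: l'_def u'_def)
    qed
    have "emeasure lborel (box l' u') = ennreal (\<Prod>b\<in>Basis. (u' - l') \<bullet> b)"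
      by (simp only: emeasure_lborel_box_eq if_P[OF le])
    also have "(\<Prod>b\<in>Basis. (u' - l') \<bullet> b) = (u$2 - l$2) * (u$3 - l$3)"
      by (simp only: prod_Basis_cart UNIV_2) (simp add: l'_def u'_def)
    finally show ?thesis using e1 by simp
  qed
  also have "\<dots> = ennreal (\<Prod>b\<in>Basis. (u - l) \<bullet> b)"
  proof -
    have "(\<Prod>b\<in>Basis. (u - l) \<bullet> b) = (u$1 - l$1) * ((u$2 - l$2) * (u$3 - l$3))"
      by (simp only: prod_Basis_cart UNIV_3) (simp add: mult.assoc)
    moreover have "ennreal (u$1 - l$1) * ennreal ((u$2 - l$2) * (u$3 - l$3)) = ennreal ((u$1 - l$1) * ((u$2 - l$2) * (u$3 - l$3)))"
      using luc[of 1] luc[of 2] luc[of 3] by (intro ennreal_mult[symmetric]) auto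
    ultimately show ?thesis by simp
  qed
  finally show "emeasure (distr (lborel \<Otimes>\<^sub>M lborel) borel psi3) (box l u) = ennreal (\<Prod>b\<in>Basis. (u - l) \<bullet> b)" .
qed simp
lemma distr_orthogonal_lborel:
  fixes Q :: "real^3 \<Rightarrow> real^3"
  assumes Q: "orthogonal_transformation Q"
  shows "distr lborel borel Q = lborel"
proof -
  have linQ: "linear Q" using Q by (rule orthogonal_transformation_linear)
  have contQ: "continuous_on UNIV Q"
    using linQ by (simp add: linear_continuous_on linear_conv_bounded_linear)
  have Qm[measurable]: "Q \<in> borel_measurable lborel"
    using borel_measurable_continuous_onI[OF contQ] by (simp add: measurable_lborel1)
  define Qi where "Qi = inv Q"
  have Qi: "orthogonal_transformation Qi" unfolding Qi_def using Q by (rule orthogonal_transformation_inv)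
  have bijQ: "bij Q" using Q by (rule orthogonal_transformation_bij)
  show ?thesis
  proof (rule lborel_eqI[symmetric])
    fix l u :: "real^3"
    assume lu: "\<And>b. b \<in> Basis \<Longrightarrow> l \<bullet> b \<le> u \<bullet> b"
    have vim: "Q -` box l u = Qi ` box l u"
      unfolding Qi_def using bijQ by (rule bij_vimage_eq_inv_image)
    have sets: "Q -` box l u \<in> sets lborel" using measurable_sets[OF Qm, of "box l u"] by simp
    have bnd: "bounded (Q -` box l u)"
      unfolding vim using orthogonal_transformation_linear[OF Qi]
      by (intro bounded_linear_image bounded_box) (simp add: linear_conv_bounded_linear)
    have "emeasure (distr lborel borel Q) (box l u) = emeasure lborel (Q -` box l u)"
      by (subst emeasure_distr) auto
    also have "\<dots> = ennreal (measure lborel (Q -` box l u))"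
      using emeasure_bounded_finite[OF bnd] by (simp add: emeasure_eq_ennreal_measure)
    also have "measure lborel (Q -` box l u) = measure lebesgue (Q -` box l u)"
      using sets by simp
    also have "\<dots> = measure lebesgue (box l u)"
      unfolding vim by (rule measure_orthogonal_image[OF Qi]) simp
    also have "\<dots> = measure lborel (box l u)" by simp
    also have "ennreal (measure lborel (box l u)) = emeasure lborel (box l u)"
      using emeasure_bounded_finite[of "box l u"] by (simp add: emeasure_eq_ennreal_measure)
    also have "\<dots> = ennreal (\<Prod>b\<in>Basis. (u - l) \<bullet> b)"
      using lu by (simp add: emeasure_lborel_box_eq)
    finally show "emeasure (distr lborel borel Q) (box l u) = ennreal (\<Prod>b\<in>Basis. (u - l) \<bullet> b)" .
  qed simp
qed


lemma islimpt_real_interval_mid: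
  fixes a b :: real assumes ab: "a < b"
  shows "complex_of_real ((a + b) / 2) islimpt (complex_of_real ` {a<..<b})"
proof (unfold islimpt_approachable, intro allI impI)
  fix e :: real assume e: "0 < e"
  define d where "d = min (e / 2) ((b - a) / 4)"
  have d: "0 < d" "d < e" "d \<le> (b - a) / 4" using e assms unfolding d_def by (auto simp: min_def)
  show "\<exists>x'\<in>complex_of_real ` {a<..<b}. x' \<noteq> complex_of_real ((a + b) / 2) \<and> dist x' (complex_of_real ((a + b) / 2)) < e"
  proof (intro bexI conjI)
    show "complex_of_real ((a + b) / 2 + d) \<in> complex_of_real ` {a<..<b}"
      using d ab by (intro imageI) (simp add: field_simps)
    show "complex_of_real ((a + b) / 2 + d) \<noteq> complex_of_real ((a + b) / 2)"
      by (simp only: of_real_eq_iff) (use d in linarith)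
    show "dist (complex_of_real ((a + b) / 2 + d)) (complex_of_real ((a + b) / 2)) < e"
      using d by (simp add: dist_norm)
  qed
qed

lemma fourier_powser:
  fixes H :: "real \<Rightarrow> complex" and R :: real and z :: complex
  assumes intH: "integrable lborel H"
    and supp: "\<And>t. R < \<bar>t\<bar> \<Longrightarrow> H t = 0"
    and R: "0 \<le> R"
  shows "(\<lambda>n. (CLINT t|lborel. ((- \<i> * complex_of_real t) ^ n / fact n) * H t) * z ^ n) sums
         (CLINT t|lborel. exp (- \<i> * z * complex_of_real t) * H t)"
proof -
  have [measurable]: "H \<in> borel_measurable lborel" using intH by auto
  define f where "f n t = ((- \<i> * z * complex_of_real t) ^ n / fact n) * H t" for n t
  have fm[measurable]: "f n \<in> borel_measurable lborel" for n
    unfolding f_def by measurable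
  have bound: "norm (f n t) \<le> (norm z * R) ^ n / fact n * norm (H t)" for n t
  proof (cases "\<bar>t\<bar> \<le> R")
    case True
    have "norm (f n t) = (norm z * \<bar>t\<bar>) ^ n / fact n * norm (H t)"
      unfolding f_def by (simp add: norm_mult norm_divide norm_power power_mult_distrib)
    also have "\<dots> \<le> (norm z * R) ^ n / fact n * norm (H t)"
      using True by (intro mult_right_mono divide_right_mono power_mono mult_left_mono) auto
    finally show ?thesis .
  next
    case False then show ?thesis using supp[of t] by (simp add: f_def)
  qed
  have intb: "integrable lborel (\<lambda>t. (norm z * R) ^ n / fact n * norm (H t))" for n
    using intH by auto
  have intf: "integrable lborel (f n)" for n
    by (rule Bochner_Integration.integrable_bound[OF intb[of n]]) (use bound R in \<open>auto simp: abs_mult power_abs\<close>)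
  have sumpt: "summable (\<lambda>n. norm (f n t))" for t
  proof -
    have "norm (f n t) = inverse (fact n) * (norm z * \<bar>t\<bar>) ^ n * norm (H t)" for n
      unfolding f_def by (simp add: norm_mult norm_divide norm_power power_mult_distrib field_simps)
    then show ?thesis using summable_mult2[OF summable_exp[of "norm z * \<bar>t\<bar>"], of "norm (H t)"]
      by simp
  qed
  have sumint: "summable (\<lambda>n. LINT t|lborel. norm (f n t))"
  proof (rule summable_comparison_test')
    show "summable (\<lambda>n. inverse (fact n) * (norm z * R) ^ n * (LINT t|lborel. norm (H t)))"
      by (intro summable_mult2 summable_exp)
    fix n :: nat
    have "norm (LINT t|lborel. norm (f n t)) = (LINT t|lborel. norm (f n t))" by simp
    also have "\<dots> \<le> (LINT t|lborel. (norm z * R) ^ n / fact n * norm (H t))"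
      by (rule integral_mono) (use intf intb bound in auto)
    also have "\<dots> = inverse (fact n) * (norm z * R) ^ n * (LINT t|lborel. norm (H t))"
      by (simp add: field_simps)
    finally show "norm (LINT t|lborel. norm (f n t)) \<le> inverse (fact n) * (norm z * R) ^ n * (LINT t|lborel. norm (H t))" .
  qed
  have S: "(\<lambda>n. integral\<^sup>L lborel (f n)) sums (LINT t|lborel. (\<Sum>n. f n t))"
    by (rule sums_integral[OF intf]) (use sumpt sumint in auto)
  have pt: "(\<Sum>n. f n t) = exp (- \<i> * z * complex_of_real t) * H t" for t
  proof -
    have "(\<lambda>n. (- \<i> * z * complex_of_real t) ^ n /\<^sub>R fact n) sums exp (- \<i> * z * complex_of_real t)"
      by (rule exp_converges)
    then have "(\<lambda>n. (- \<i> * z * complex_of_real t) ^ n /\<^sub>R fact n * H t) sums (exp (- \<i> * z * complex_of_real t) * H t)"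
      by (rule sums_mult2)
    then show ?thesis unfolding f_def by (simp add: scaleR_conv_of_real divide_inverse sums_iff mult_ac)
  qed
  have ci: "integral\<^sup>L lborel (f n) = (CLINT t|lborel. ((- \<i> * complex_of_real t) ^ n / fact n) * H t) * z ^ n" for n
  proof -
    have "f n = (\<lambda>t. ((- \<i> * complex_of_real t) ^ n / fact n) * H t * z ^ n)"
    proof
      fix t
      have "(- \<i> * z * complex_of_real t) ^ n = z ^ n * (- \<i> * complex_of_real t) ^ n"
        by (subst power_mult_distrib[symmetric]) (simp add: mult_ac)
      then show "f n t = ((- \<i> * complex_of_real t) ^ n / fact n) * H t * z ^ n"
        unfolding f_def by simp
    qed
    then show ?thesis by simp
  qed
  show ?thesis using S by (simp add: pt ci)
qed

lemma fourier_interval_zero: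
  fixes H :: "real \<Rightarrow> complex" and R a b :: real
  assumes intH: "integrable lborel H"
    and supp: "\<And>t. R < \<bar>t\<bar> \<Longrightarrow> H t = 0"
    and ab: "a < b"
    and F0: "\<And>k. a < k \<Longrightarrow> k < b \<Longrightarrow> (CLINT t|lborel. exp (- \<i> * complex_of_real (k * t)) * H t) = 0"
  shows "AE t in lborel. H t = 0"
proof -
  define R' where "R' = max R 0"
  have supp': "\<And>t. R' < \<bar>t\<bar> \<Longrightarrow> H t = 0" using supp unfolding R'_def by auto
  have R': "0 \<le> R'" unfolding R'_def by auto
  define c where "c n = (CLINT t|lborel. ((- \<i> * complex_of_real t) ^ n / fact n) * H t)" for n
  have ser: "(\<lambda>n. c n * z ^ n) sums (CLINT t|lborel. exp (- \<i> * z * complex_of_real t) * H t)" for z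
    unfolding c_def by (rule fourier_powser[OF intH supp' R'])
  define G where "G z = (\<Sum>n. c n * z ^ n)" for z
  have Geq: "G z = (CLINT t|lborel. exp (- \<i> * z * complex_of_real t) * H t)" for z
    using ser[of z] unfolding G_def by (simp add: sums_iff)
  have "G holomorphic_on UNIV"
  proof -
    have "(G has_field_derivative (\<Sum>n. diffs c n * z ^ n)) (at z)" for z
      unfolding G_def[abs_def]
      by (rule termdiffs_strong_converges_everywhere) (use ser in \<open>auto simp: sums_iff\<close>)
    then show ?thesis
      unfolding holomorphic_on_def field_differentiable_def
      by (meson has_field_derivative_at_within)
  qed
  then have G0: "G w = 0" for w
  proof (rule analytic_continuation[where U="complex_of_real ` {a<..<b}" and \<xi>="complex_of_real ((a + b) / 2)"])
    show "complex_of_real ((a + b) / 2) islimpt complex_of_real ` {a<..<b}"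
      by (rule islimpt_real_interval_mid[OF ab])
    fix z assume "z \<in> complex_of_real ` {a<..<b}"
    then obtain k where k: "a < k" "k < b" "z = complex_of_real k" by auto
    show "G z = 0" using F0[OF k(1,2)] by (simp add: Geq k(3) mult.assoc)
  qed auto
  have "(CLINT t|lborel. exp (- \<i> * complex_of_real (k * t)) * H t) = 0" for k
    using G0[of "complex_of_real k"] by (simp add: Geq mult.assoc)
  then show ?thesis
    by (rule complex_fourier_zero[OF intH])
qed


lemma frame_facts:
  fixes x0 q0 :: "real^3"
  assumes x0: "norm x0 = 1" and n: "cross3 x0 q0 \<noteq> 0"
  defines "l \<equiv> (1 / norm (cross3 x0 q0)) *\<^sub>R cross3 x0 q0"
  defines "m \<equiv> cross3 x0 l"
  shows "x0 \<bullet> x0 = 1" "l \<bullet> l = 1" "m \<bullet> m = 1" "x0 \<bullet> l = 0" "x0 \<bullet> m = 0" "l \<bullet> m = 0"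
proof -
  show xx: "x0 \<bullet> x0 = 1" using x0 by (simp add: power2_norm_eq_inner[symmetric])
  have nn: "norm (cross3 x0 q0) > 0" using n by simp
  show ll: "l \<bullet> l = 1" unfolding l_def using nn
    by (simp add: power2_norm_eq_inner[symmetric] power2_eq_square)
  show xl: "x0 \<bullet> l = 0" unfolding l_def by (simp add: dot_cross_self)
  show "x0 \<bullet> m = 0" unfolding m_def by (simp add: dot_cross_self)
  show "l \<bullet> m = 0" unfolding m_def by (simp add: dot_cross_self)
  have "(norm m)\<^sup>2 + (x0 \<bullet> l)\<^sup>2 = (norm x0 * norm l)\<^sup>2"
    unfolding m_def by (rule norm_cross_dot)
  moreover have "norm l = 1" using ll by (simp add: norm_eq_sqrt_inner)
  ultimately have "(norm m)\<^sup>2 = 1" using x0 xl by simp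
  then show "m \<bullet> m = 1" by (simp add: power2_norm_eq_inner)
qed

definition frameQ :: "real^3 \<Rightarrow> real^3 \<Rightarrow> real^3 \<Rightarrow> real^3 \<Rightarrow> real^3" where
  "frameQ x0 l m v = (- (v $ 1)) *\<^sub>R x0 + (v $ 2) *\<^sub>R l + (v $ 3) *\<^sub>R m"

lemma frameQ_orth:
  assumes "x0 \<bullet> x0 = 1" "l \<bullet> l = 1" "m \<bullet> m = 1" "x0 \<bullet> l = 0" "x0 \<bullet> m = 0" "l \<bullet> m = 0"
  shows "orthogonal_transformation (frameQ x0 l m)"
  unfolding orthogonal_transformation_def
proof (intro conjI allI)
  show "linear (frameQ x0 l m)"
    by (rule linearI) (simp_all add: frameQ_def algebra_simps)
  fix v w :: "real^3"
  have c: "l \<bullet> x0 = 0" "m \<bullet> x0 = 0" "m \<bullet> l = 0" using assms by (simp_all add: inner_commute)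
  show "frameQ x0 l m v \<bullet> frameQ x0 l m w = v \<bullet> w"
  proof -
    have vw: "v \<bullet> w = v$1 * w$1 + v$2 * w$2 + v$3 * w$3" by (simp add: inner_vec_def sum_3)
    show ?thesis unfolding frameQ_def vw
      by (simp add: inner_add_left inner_add_right assms c algebra_simps)
  qed
qed

definition framePhi :: "real^3 \<Rightarrow> real^3 \<Rightarrow> real^3 \<Rightarrow> real \<times> (real^2) \<Rightarrow> real^3" where
  "framePhi x0 l m p = (- fst p) *\<^sub>R x0 + (snd p $ 1) *\<^sub>R l + (snd p $ 2) *\<^sub>R m"

lemma framePhi_comp: "framePhi x0 l m = frameQ x0 l m \<circ> psi3"
  by (auto simp: fun_eq_iff framePhi_def frameQ_def psi3_def)

lemma distr_framePhi:
  assumes "x0 \<bullet> x0 = 1" "l \<bullet> l = 1" "m \<bullet> m = 1" "x0 \<bullet> l = 0" "x0 \<bullet> m = 0" "l \<bullet> m = 0"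
  shows "distr (lborel \<Otimes>\<^sub>M lborel) borel (framePhi x0 l m) = lborel"
proof -
  have Q: "orthogonal_transformation (frameQ x0 l m)" by (rule frameQ_orth[OF assms])
  have contQ: "continuous_on UNIV (frameQ x0 l m)"
    using orthogonal_transformation_linear[OF Q] by (simp add: linear_continuous_on linear_conv_bounded_linear)
  have Qm: "frameQ x0 l m \<in> measurable borel borel"
    using borel_measurable_continuous_onI[OF contQ] .
  have "distr (lborel \<Otimes>\<^sub>M lborel) borel (framePhi x0 l m)
      = distr (distr (lborel \<Otimes>\<^sub>M lborel) borel psi3) borel (frameQ x0 l m)"
    unfolding framePhi_comp by (rule distr_distr[symmetric, OF Qm psi3_measurable])
  also have "\<dots> = lborel"
    unfolding distr_psi3 by (rule distr_orthogonal_lborel[OF Q])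
  finally show ?thesis .
qed

lemma framePhi_measurable:
  "framePhi x0 l m \<in> measurable (lborel \<Otimes>\<^sub>M lborel) borel"
proof -
  have "framePhi x0 l m \<in> borel_measurable borel"
    by (rule borel_measurable_continuous_onI) (auto simp: framePhi_def intro!: continuous_intros)
  then show ?thesis by (simp add: lborel_prod measurable_lborel1)
qed

lemma fubini_frame:
  fixes f :: "real^3 \<Rightarrow> complex"
  assumes fr: "x0 \<bullet> x0 = 1" "l \<bullet> l = 1" "m \<bullet> m = 1" "x0 \<bullet> l = 0" "x0 \<bullet> m = 0" "l \<bullet> m = 0"
    and f: "integrable lborel f"
  shows "integrable lborel (\<lambda>\<alpha>. LINT u|(lborel :: (real^2) measure). f ((- \<alpha>) *\<^sub>R x0 + (u$1) *\<^sub>R l + (u$2) *\<^sub>R m))"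
    and "integral\<^sup>L lborel f = (LINT \<alpha>|lborel. LINT u|(lborel :: (real^2) measure). f ((- \<alpha>) *\<^sub>R x0 + (u$1) *\<^sub>R l + (u$2) *\<^sub>R m))"
proof -
  have D: "distr (lborel \<Otimes>\<^sub>M lborel) borel (framePhi x0 l m) = lborel"
    by (rule distr_framePhi[OF fr])
  have fm: "f \<in> borel_measurable borel" using f by auto
  have "integrable (distr (lborel \<Otimes>\<^sub>M lborel) borel (framePhi x0 l m)) f"
    unfolding D by (rule f)
  then have I2: "integrable (lborel \<Otimes>\<^sub>M (lborel :: (real^2) measure)) (\<lambda>p. f (framePhi x0 l m p))"
    by (subst (asm) integrable_distr_eq[OF framePhi_measurable fm])
  show "integrable lborel (\<lambda>\<alpha>. LINT u|(lborel :: (real^2) measure). f ((- \<alpha>) *\<^sub>R x0 + (u$1) *\<^sub>R l + (u$2) *\<^sub>R m))"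
    using lborel_pair.integrable_fst'[OF I2] by (simp add: framePhi_def)
  have "integral\<^sup>L lborel f = integral\<^sup>L (distr (lborel \<Otimes>\<^sub>M lborel) borel (framePhi x0 l m)) f"
    by (simp add: D)
  also have "\<dots> = integral\<^sup>L (lborel \<Otimes>\<^sub>M (lborel :: (real^2) measure)) (\<lambda>p. f (framePhi x0 l m p))"
    by (rule integral_distr[OF framePhi_measurable fm])
  also have "\<dots> = (LINT \<alpha>|lborel. LINT u|(lborel :: (real^2) measure). f (framePhi x0 l m (\<alpha>, u)))"
    by (rule lborel_pair.integral_fst'[OF I2, symmetric])
  finally show "integral\<^sup>L lborel f = (LINT \<alpha>|lborel. LINT u|(lborel :: (real^2) measure). f ((- \<alpha>) *\<^sub>R x0 + (u$1) *\<^sub>R l + (u$2) *\<^sub>R m))"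
    by (simp add: framePhi_def)
qed


lemma cdot_zero_right[simp]: "cdot e 0 = 0"
  by (simp add: cdot_def)

lemma cdot_zero_left[simp]: "cdot 0 v = 0"
  by (simp add: cdot_def)

lemma norm_cdot_le: "norm (cdot e v) \<le> (\<Sum>i\<in>UNIV. \<bar>e $ i\<bar>) * norm v"
proof -
  have "norm (cdot e v) \<le> (\<Sum>i\<in>UNIV. norm (complex_of_real (e $ i) * v $ i))"
    unfolding cdot_def by (rule norm_sum)
  also have "\<dots> \<le> (\<Sum>i\<in>UNIV. \<bar>e $ i\<bar> * norm v)"
    by (intro sum_mono) (simp add: norm_mult mult_left_mono Finite_Cartesian_Product.norm_nth_le)
  also have "\<dots> = (\<Sum>i\<in>UNIV. \<bar>e $ i\<bar>) * norm v" by (simp add: sum_distrib_right)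
  finally show ?thesis .
qed

lemma vec_nth_measurable[measurable (raw)]:
  fixes f :: "'a \<Rightarrow> complex^'n"
  assumes "f \<in> borel_measurable M"
  shows "(\<lambda>x. f x $ i) \<in> borel_measurable M"
proof -
  have "(\<lambda>v::complex^'n. v $ i) \<in> borel_measurable borel"
    by (intro borel_measurable_continuous_onI linear_continuous_on bounded_linear_vec_nth)
  from measurable_compose[OF assms this] show ?thesis by simp
qed

lemma cdot_measurable[measurable]:
  assumes [measurable]: "J \<in> borel_measurable M"
  shows "(\<lambda>y. cdot e (J y)) \<in> borel_measurable M"
  unfolding cdot_def by measurable

lemma cdot_far_field:
  fixes e x :: "real^3" and J :: "real^3 \<Rightarrow> complex^3"
  assumes ex: "e \<bullet> x = 0"
    and int: "\<And>j. integrable lborel (\<lambda>y. exp (- \<i> * complex_of_real (k * (x \<bullet> y))) * (J y $ j))"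
  shows "cdot e (far_field eps mu x k J) = \<i> * complex_of_real (k / sqrt (eps * mu)) * complex_of_real mu *
           (LINT y|lborel. exp (- \<i> * complex_of_real (k * (x \<bullet> y))) * cdot e (J y))"
proof -
  define I where "I j = (LINT y|lborel. exp (- \<i> * complex_of_real (k * (x \<bullet> y))) * (J y $ j))" for j
  define c where "c = \<i> * complex_of_real (k / sqrt (eps * mu)) * complex_of_real mu"
  have R: "(LINT y|lborel. exp (- \<i> * complex_of_real (k * (x \<bullet> y))) * cdot e (J y)) = (\<Sum>j\<in>UNIV. complex_of_real (e$j) * I j)"
  proof -
    have "(\<lambda>y. exp (- \<i> * complex_of_real (k * (x \<bullet> y))) * cdot e (J y))
        = (\<lambda>y. \<Sum>j\<in>UNIV. complex_of_real (e$j) * (exp (- \<i> * complex_of_real (k * (x \<bullet> y))) * (J y $ j)))"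
      by (auto simp: cdot_def sum_distrib_left mult_ac)
    moreover have "(LINT y|lborel. (\<Sum>j\<in>UNIV. complex_of_real (e$j) * (exp (- \<i> * complex_of_real (k * (x \<bullet> y))) * (J y $ j))))
       = (\<Sum>j\<in>UNIV. (LINT y|lborel. complex_of_real (e$j) * (exp (- \<i> * complex_of_real (k * (x \<bullet> y))) * (J y $ j))))"
      by (rule Bochner_Integration.integral_sum) (rule integrable_mult_right, rule int)
    ultimately show ?thesis by (simp add: I_def)
  qed
  have L: "cdot e (far_field eps mu x k J) = (\<Sum>i\<in>UNIV. complex_of_real (e$i) * (c * (\<Sum>j\<in>UNIV. complex_of_real ((if i = j then 1 else 0) - x$i * x$j) * I j)))"
    by (simp add: cdot_def far_field_def c_def I_def)
  have ex': "complex_of_real (e$1) * complex_of_real (x$1) + complex_of_real (e$2) * complex_of_real (x$2) + complex_of_real (e$3) * complex_of_real (x$3) = 0"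
  proof -
    have "complex_of_real (e \<bullet> x) = 0" using ex by simp
    then show ?thesis by (simp add: inner_vec_def sum_3)
  qed
  have "cdot e (far_field eps mu x k J) = c * (\<Sum>j\<in>UNIV. complex_of_real (e$j) * I j)"
    unfolding L using ex' by (simp add: sum_3) algebra
  then show ?thesis using R by (simp add: c_def)
qed

lemma adm_integrable:
  fixes g :: "real^3 \<Rightarrow> complex"
  assumes adm: "admissible_source J D" and gm: "g \<in> borel_measurable lborel"
    and gb: "\<And>y. norm (g y) \<le> C * norm (J y)"
  shows "integrable lborel g"
proof -
  obtain B where B: "AE y in lborel. norm (J y) \<le> B"
    using adm unfolding admissible_source_def by blast
  have J0: "\<And>y. y \<notin> D \<Longrightarrow> J y = 0" using adm unfolding admissible_source_def by blast
  have bD: "bounded D" using adm unfolding admissible_source_def lipschitz_domain_def by blast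
  obtain R where R: "\<And>z. z \<in> D \<Longrightarrow> norm z \<le> R" using bD unfolding bounded_iff by blast
  have intb: "integrable lborel (\<lambda>y::real^3. (\<bar>C\<bar> * \<bar>B\<bar>) * indicator (cball 0 R) y :: real)"
    using emeasure_bounded_finite[OF bounded_cball[of "0::real^3" R]]
    by (intro integrable_mult_right integrable_real_indicator) auto
  show ?thesis
  proof (rule Bochner_Integration.integrable_bound[OF intb gm])
    show "AE y in lborel. norm (g y) \<le> norm ((\<bar>C\<bar> * \<bar>B\<bar>) * indicator (cball 0 R) y :: real)"
      using B
    proof eventually_elim
      case (elim y)
      show ?case
      proof (cases "y \<in> D")
        case True
        then have "y \<in> cball 0 R" using R by auto
        have "norm (g y) \<le> C * norm (J y)" by (rule gb)
        also have "\<dots> \<le> \<bar>C\<bar> * norm (J y)" by (simp add: mult_right_mono)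
        also have "\<dots> \<le> \<bar>C\<bar> * \<bar>B\<bar>" using elim by (intro mult_left_mono) auto
        finally show ?thesis using \<open>y \<in> cball 0 R\<close> by simp
      next
        case False
        then show ?thesis using gb[of y] J0[of y] by simp
      qed
    qed
  qed
qed


lemma strip_facts:
  fixes D :: "(real^3) set" and x0 :: "real^3"
  assumes L: "lipschitz_domain D" and x0: "norm x0 = 1"
  shows "(INF z\<in>D. z \<bullet> x0) < (SUP z\<in>D. z \<bullet> x0)"
    and "\<exists>R. \<forall>\<alpha>. R < \<bar>\<alpha>\<bar> \<longrightarrow> (- \<alpha> < (INF z\<in>D. z \<bullet> x0) \<or> (SUP z\<in>D. z \<bullet> x0) < - \<alpha>)"
    and "\<And>y. y \<in> D \<Longrightarrow> (INF z\<in>D. z \<bullet> x0) \<le> y \<bullet> x0 \<and> y \<bullet> x0 \<le> (SUP z\<in>D. z \<bullet> x0)"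
    and "\<And>\<alpha>. plane x0 \<alpha> \<subseteq> strip_hull x0 D \<longleftrightarrow> (INF z\<in>D. z \<bullet> x0) \<le> - \<alpha> \<and> - \<alpha> \<le> (SUP z\<in>D. z \<bullet> x0)"
proof -
  define I where "I = (INF z\<in>D. z \<bullet> x0)"
  define S where "S = (SUP z\<in>D. z \<bullet> x0)"
  have oD: "open D" and bD: "bounded D" and neD: "D \<noteq> {}"
    using L unfolding lipschitz_domain_def by auto
  obtain a where a: "\<And>z. z \<in> D \<Longrightarrow> norm z \<le> a" using bD unfolding bounded_iff by blast
  have ab: "\<bar>z \<bullet> x0\<bar> \<le> a" if "z \<in> D" for z
  proof -
    have "\<bar>z \<bullet> x0\<bar> \<le> norm z * norm x0" by (rule Cauchy_Schwarz_ineq2)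
    then show ?thesis using a[OF that] x0 by simp
  qed
  have ab2: "- a \<le> z \<bullet> x0" "z \<bullet> x0 \<le> a" if "z \<in> D" for z
    using ab[OF that] abs_le_iff[of "z \<bullet> x0" a] by linarith+
  have bb: "bdd_below ((\<lambda>z. z \<bullet> x0) ` D)"
    unfolding bdd_below_def using ab2 by (intro exI[of _ "- a"]) blast
  have ba: "bdd_above ((\<lambda>z. z \<bullet> x0) ` D)"
    unfolding bdd_above_def using ab2 by (intro exI[of _ "a"]) blast
  have mem: "I \<le> y \<bullet> x0 \<and> y \<bullet> x0 \<le> S" if "y \<in> D" for y
    unfolding I_def S_def using that bb ba by (auto intro: cINF_lower cSUP_upper)
  then show "\<And>y. y \<in> D \<Longrightarrow> (INF z\<in>D. z \<bullet> x0) \<le> y \<bullet> x0 \<and> y \<bullet> x0 \<le> (SUP z\<in>D. z \<bullet> x0)"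
    unfolding I_def S_def by blast
  have xx: "x0 \<bullet> x0 = 1" using x0 by (simp add: power2_norm_eq_inner[symmetric])
  obtain p where p: "p \<in> D" using neD by blast
  obtain r where r: "r > 0" "ball p r \<subseteq> D" using oD p openE by blast
  have p1: "p + (r/2) *\<^sub>R x0 \<in> D" using r x0 by (intro subsetD[OF r(2)]) (simp add: dist_norm)
  have p2: "p - (r/2) *\<^sub>R x0 \<in> D" using r x0 by (intro subsetD[OF r(2)]) (simp add: dist_norm)
  have "I \<le> p \<bullet> x0 - r/2" using mem[OF p2] by (simp add: inner_diff_left xx)
  moreover have "p \<bullet> x0 + r/2 \<le> S" using mem[OF p1] by (simp add: inner_add_left xx)
  ultimately show "(INF z\<in>D. z \<bullet> x0) < (SUP z\<in>D. z \<bullet> x0)" using r unfolding I_def S_def by linarith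
  have Ia: "- a \<le> I" unfolding I_def using neD ab2 by (intro cINF_greatest) auto
  have Sa: "S \<le> a" unfolding S_def using neD ab2 by (intro cSUP_least) auto
  show "\<exists>R. \<forall>\<alpha>. R < \<bar>\<alpha>\<bar> \<longrightarrow> (- \<alpha> < (INF z\<in>D. z \<bullet> x0) \<or> (SUP z\<in>D. z \<bullet> x0) < - \<alpha>)"
    using Ia Sa unfolding I_def S_def by (intro exI[of _ a]) (auto simp: abs_if split: if_splits)
  show "plane x0 \<alpha> \<subseteq> strip_hull x0 D \<longleftrightarrow> (INF z\<in>D. z \<bullet> x0) \<le> - \<alpha> \<and> - \<alpha> \<le> (SUP z\<in>D. z \<bullet> x0)" for \<alpha>
  proof
    assume "plane x0 \<alpha> \<subseteq> strip_hull x0 D"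
    moreover have "(- \<alpha>) *\<^sub>R x0 \<in> plane x0 \<alpha>" by (simp add: plane_def xx)
    ultimately have "(- \<alpha>) *\<^sub>R x0 \<in> strip_hull x0 D" by blast
    then show "(INF z\<in>D. z \<bullet> x0) \<le> - \<alpha> \<and> - \<alpha> \<le> (SUP z\<in>D. z \<bullet> x0)"
      by (simp add: strip_hull_def xx)
  next
    assume "(INF z\<in>D. z \<bullet> x0) \<le> - \<alpha> \<and> - \<alpha> \<le> (SUP z\<in>D. z \<bullet> x0)"
    then show "plane x0 \<alpha> \<subseteq> strip_hull x0 D"
      by (auto simp: plane_def strip_hull_def)
  qed
qed

lemma Jhat_vanish:
  assumes fr: "x0 \<bullet> x0 = 1" "x0 \<bullet> l = 0" "x0 \<bullet> m = 0"
    and J0: "\<And>y. y \<notin> D \<Longrightarrow> J y = 0"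
    and out: "\<And>y. y \<in> D \<Longrightarrow> y \<bullet> x0 \<noteq> - \<alpha>"
  shows "J_hat x0 l m e J \<alpha> = 0"
proof -
  have "J ((- \<alpha>) *\<^sub>R x0 + (u$1) *\<^sub>R l + (u$2) *\<^sub>R m) = 0" for u :: "real^2"
  proof (rule J0)
    have "x0 \<bullet> ((- \<alpha>) *\<^sub>R x0 + (u$1) *\<^sub>R l + (u$2) *\<^sub>R m) = - \<alpha>"
      using fr by (simp add: inner_add_right inner_diff_right)
    then have "((- \<alpha>) *\<^sub>R x0 + (u$1) *\<^sub>R l + (u$2) *\<^sub>R m) \<bullet> x0 = - \<alpha>"
      by (simp add: inner_commute)
    then show "(- \<alpha>) *\<^sub>R x0 + (u$1) *\<^sub>R l + (u$2) *\<^sub>R m \<notin> D" using out by blast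
  qed
  then show ?thesis by (simp add: J_hat_def plane_integral_def)
qed

lemma interval_ae_contra:
  fixes g1 g2 :: "real \<Rightarrow> complex"
  assumes ab: "a < b" and A: "A \<in> null_sets lborel" and ae: "AE \<alpha> in lborel. g1 \<alpha> = g2 \<alpha>"
    and sub: "\<And>\<alpha>. a < \<alpha> \<Longrightarrow> \<alpha> < b \<Longrightarrow> \<alpha> \<in> A \<or> g1 \<alpha> \<noteq> g2 \<alpha>"
  shows False
proof -
  obtain N where N: "{\<alpha>. g1 \<alpha> \<noteq> g2 \<alpha>} \<subseteq> N" "N \<in> null_sets lborel"
  proof (rule AE_E[OF ae])
    fix N assume "{x \<in> space lborel. \<not> g1 x = g2 x} \<subseteq> N" "emeasure lborel N = 0" "N \<in> sets lborel"
    then show thesis using that[of N] by (auto simp: null_sets_def)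
  qed
  have sub2: "{a<..<b} \<subseteq> A \<union> N" using sub N(1) by fastforce
  have "{a<..<b} \<in> null_sets lborel"
    by (rule null_sets_subset[OF null_sets.Un[OF A N(2)] _ sub2]) simp
  then have "emeasure lborel {a<..<b} = 0" by auto
  then show False using ab by simp
qed

lemma strip_from_ae:
  fixes g1 g2 :: "real \<Rightarrow> complex" and I1 S1 I2 S2 :: real
  assumes IS1: "I1 < S1" and IS2: "I2 < S2"
    and van1: "\<And>\<alpha>. - \<alpha> < I1 \<or> S1 < - \<alpha> \<Longrightarrow> g1 \<alpha> = 0"
    and van2: "\<And>\<alpha>. - \<alpha> < I2 \<or> S2 < - \<alpha> \<Longrightarrow> g2 \<alpha> = 0"
    and ae: "AE \<alpha> in lborel. g1 \<alpha> = g2 \<alpha>"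
    and null1: "{\<alpha>. (I1 \<le> - \<alpha> \<and> - \<alpha> \<le> S1) \<and> g1 \<alpha> = 0} \<in> null_sets lborel"
    and null2: "{\<alpha>. (I2 \<le> - \<alpha> \<and> - \<alpha> \<le> S2) \<and> g2 \<alpha> = 0} \<in> null_sets lborel"
  shows "I1 = I2 \<and> S1 = S2"
proof -
  have ae': "AE \<alpha> in lborel. g2 \<alpha> = g1 \<alpha>" using ae by eventually_elim simp
  have lower: "\<not> Ia < Ib"
    if IS: "Ia < Sa" and vb: "\<And>\<alpha>. - \<alpha> < Ib \<Longrightarrow> gb \<alpha> = 0"
      and aeab: "AE \<alpha> in lborel. ga \<alpha> = gb \<alpha>"
      and na: "{\<alpha>. (Ia \<le> - \<alpha> \<and> - \<alpha> \<le> Sa) \<and> ga \<alpha> = 0} \<in> null_sets lborel"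
    for Ia Sa Ib and ga gb :: "real \<Rightarrow> complex"
  proof
    assume lt: "Ia < Ib"
    show False
    proof (rule interval_ae_contra[OF _ na aeab])
      show "- min Ib Sa < - Ia" using lt IS by simp
      fix \<alpha> assume "- min Ib Sa < \<alpha>" "\<alpha> < - Ia"
      then have "Ia \<le> - \<alpha>" "- \<alpha> \<le> Sa" "- \<alpha> < Ib" by auto
      then show "\<alpha> \<in> {\<alpha>. (Ia \<le> - \<alpha> \<and> - \<alpha> \<le> Sa) \<and> ga \<alpha> = 0} \<or> ga \<alpha> \<noteq> gb \<alpha>"
        using vb[of \<alpha>] by auto
    qed
  qed
  have upper: "\<not> Sb < Sa"
    if IS: "Ia < Sa" and vb: "\<And>\<alpha>. Sb < - \<alpha> \<Longrightarrow> gb \<alpha> = 0"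
      and aeab: "AE \<alpha> in lborel. ga \<alpha> = gb \<alpha>"
      and na: "{\<alpha>. (Ia \<le> - \<alpha> \<and> - \<alpha> \<le> Sa) \<and> ga \<alpha> = 0} \<in> null_sets lborel"
    for Ia Sa Sb and ga gb :: "real \<Rightarrow> complex"
  proof
    assume lt: "Sb < Sa"
    show False
    proof (rule interval_ae_contra[OF _ na aeab])
      show "- Sa < - max Sb Ia" using lt IS by simp
      fix \<alpha> assume "- Sa < \<alpha>" "\<alpha> < - max Sb Ia"
      then have "Ia \<le> - \<alpha>" "- \<alpha> \<le> Sa" "Sb < - \<alpha>" by auto
      then show "\<alpha> \<in> {\<alpha>. (Ia \<le> - \<alpha> \<and> - \<alpha> \<le> Sa) \<and> ga \<alpha> = 0} \<or> ga \<alpha> \<noteq> gb \<alpha>"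
        using vb[of \<alpha>] by auto
    qed
  qed
  have "\<not> I1 < I2" by (rule lower[OF IS1 _ ae null1]) (use van2 in auto)
  moreover have "\<not> I2 < I1" by (rule lower[OF IS2 _ ae' null2]) (use van1 in auto)
  moreover have "\<not> S2 < S1" by (rule upper[OF IS1 _ ae null1]) (use van2 in auto)
  moreover have "\<not> S1 < S2" by (rule upper[OF IS2 _ ae' null2]) (use van1 in auto)
  ultimately show ?thesis by linarith
qed


theorem theorem3p1:
  fixes eps mu kmin kmax :: real
    and x0 q0 e :: "real^3"
    and J1 J2 :: "real^3 \<Rightarrow> complex^3"
    and D1 D2 :: "(real^3) set"
  defines "l \<equiv> (1 / norm (cross3 x0 q0)) *\<^sub>R cross3 x0 q0"
  defines "m \<equiv> cross3 x0 l"
  assumes "eps > 0" and "mu > 0" and "0 < kmin" and "kmin < kmax"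
    and "norm x0 = 1" and "norm q0 = 1" and "q0 \<bullet> x0 \<noteq> 0"
    and "e \<in> {l, m}"
    and "admissible_source J1 D1" and "admissible_source J2 D2"
    and "{\<alpha>. plane x0 \<alpha> \<subseteq> strip_hull x0 D1 \<and> J_hat x0 l m e J1 \<alpha> = 0} \<in> null_sets lborel"
    and "{\<alpha>. plane x0 \<alpha> \<subseteq> strip_hull x0 D2 \<and> J_hat x0 l m e J2 \<alpha> = 0} \<in> null_sets lborel"
    and "\<forall>k\<in>{kmin<..<kmax}. cdot e (far_field eps mu x0 k J1) = cdot e (far_field eps mu x0 k J2)"
  shows "strip_hull x0 D1 = strip_hull x0 D2"
proof -
  have eps: "eps > 0" and mu: "mu > 0" and kmin: "0 < kmin" and kk: "kmin < kmax"
    and x0: "norm x0 = 1" and e: "e \<in> {l, m}"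
    and adm1: "admissible_source J1 D1" and adm2: "admissible_source J2 D2"
    and null1: "{\<alpha>. plane x0 \<alpha> \<subseteq> strip_hull x0 D1 \<and> J_hat x0 l m e J1 \<alpha> = 0} \<in> null_sets lborel"
    and null2: "{\<alpha>. plane x0 \<alpha> \<subseteq> strip_hull x0 D2 \<and> J_hat x0 l m e J2 \<alpha> = 0} \<in> null_sets lborel"
    and ff: "\<forall>k\<in>{kmin<..<kmax}. cdot e (far_field eps mu x0 k J1) = cdot e (far_field eps mu x0 k J2)"
    using assms by auto
  have L1: "lipschitz_domain D1" and L2: "lipschitz_domain D2"
    using adm1 adm2 unfolding admissible_source_def by auto
  have J01: "\<And>y. y \<notin> D1 \<Longrightarrow> J1 y = 0" and J02: "\<And>y. y \<notin> D2 \<Longrightarrow> J2 y = 0"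
    using adm1 adm2 unfolding admissible_source_def by auto
  have xx: "x0 \<bullet> x0 = 1" using x0 by (simp add: power2_norm_eq_inner[symmetric])
  have xl: "x0 \<bullet> l = 0" unfolding l_def by (simp add: dot_cross_self)
  have xm: "x0 \<bullet> m = 0" unfolding m_def by (simp add: dot_cross_self)
  define I1 where "I1 = (INF z\<in>D1. z \<bullet> x0)"
  define S1 where "S1 = (SUP z\<in>D1. z \<bullet> x0)"
  define I2 where "I2 = (INF z\<in>D2. z \<bullet> x0)"
  define S2 where "S2 = (SUP z\<in>D2. z \<bullet> x0)"
  note SF1 = strip_facts[OF L1 x0, folded I1_def S1_def]
  note SF2 = strip_facts[OF L2 x0, folded I2_def S2_def]
  have van1: "J_hat x0 l m e J1 \<alpha> = 0" if "- \<alpha> < I1 \<or> S1 < - \<alpha>" for \<alpha>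
  proof (rule Jhat_vanish[OF xx xl xm J01])
    fix y assume "y \<in> D1"
    then have "I1 \<le> y \<bullet> x0" "y \<bullet> x0 \<le> S1"
      using strip_facts(3)[OF L1 x0, of y] unfolding I1_def S1_def by auto
    then show "y \<bullet> x0 \<noteq> - \<alpha>" using that by auto
  qed
  have van2: "J_hat x0 l m e J2 \<alpha> = 0" if "- \<alpha> < I2 \<or> S2 < - \<alpha>" for \<alpha>
  proof (rule Jhat_vanish[OF xx xl xm J02])
    fix y assume "y \<in> D2"
    then have "I2 \<le> y \<bullet> x0" "y \<bullet> x0 \<le> S2"
      using strip_facts(3)[OF L2 x0, of y] unfolding I2_def S2_def by auto
    then show "y \<bullet> x0 \<noteq> - \<alpha>" using that by auto
  qed
  have null1': "{\<alpha>. (I1 \<le> - \<alpha> \<and> - \<alpha> \<le> S1) \<and> J_hat x0 l m e J1 \<alpha> = 0} \<in> null_sets lborel"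
    using null1 by (simp only: SF1(4))
  have null2': "{\<alpha>. (I2 \<le> - \<alpha> \<and> - \<alpha> \<le> S2) \<and> J_hat x0 l m e J2 \<alpha> = 0} \<in> null_sets lborel"
    using null2 by (simp only: SF2(4))
  have ae: "AE \<alpha> in lborel. J_hat x0 l m e J1 \<alpha> = J_hat x0 l m e J2 \<alpha>"
  proof (cases "cross3 x0 q0 = 0")
    case True
    then have "l = 0" "m = 0" unfolding l_def m_def by simp_all
    then have "e = 0" using e by auto
    then show ?thesis by (simp add: J_hat_def plane_integral_def)
  next
    case False
    have fr: "x0 \<bullet> x0 = 1" "l \<bullet> l = 1" "m \<bullet> m = 1" "x0 \<bullet> l = 0" "x0 \<bullet> m = 0" "l \<bullet> m = 0"
      using frame_facts[OF x0 False] unfolding l_def m_def by simp_all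
    have ex: "e \<bullet> x0 = 0" using e fr by (auto simp: inner_commute)
    define Ce where "Ce = (\<Sum>i\<in>UNIV. \<bar>e $ i\<bar>)"
    define c where "c k = \<i> * complex_of_real (k / sqrt (eps * mu)) * complex_of_real mu" for k
    have Phi: "x0 \<bullet> ((- \<alpha>) *\<^sub>R x0 + (u$1) *\<^sub>R l + (u$2) *\<^sub>R m) = - \<alpha>" for \<alpha> and u :: "real^2"
      using fr by (simp add: inner_add_right inner_diff_right)
    have Phi2: "x0 \<bullet> ((u$1) *\<^sub>R l - \<alpha> *\<^sub>R x0 + (u$2) *\<^sub>R m) = - \<alpha>" for \<alpha> and u :: "real^2"
      using fr by (simp add: inner_add_right inner_diff_right)
    have key: "integrable lborel (J_hat x0 l m e J) \<and>
        (\<forall>k. cdot e (far_field eps mu x0 k J) = c k * (LINT \<alpha>|lborel. exp (- \<i> * complex_of_real ((-k) * \<alpha>)) * J_hat x0 l m e J \<alpha>))"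
      if adm: "admissible_source J D" for J D
    proof
      have Jm[measurable]: "J \<in> borel_measurable lborel" using adm unfolding admissible_source_def by auto
      have Jh: "J_hat x0 l m e J = (\<lambda>\<alpha>. LINT u|(lborel :: (real^2) measure). cdot e (J ((- \<alpha>) *\<^sub>R x0 + (u$1) *\<^sub>R l + (u$2) *\<^sub>R m)))"
        by (simp add: fun_eq_iff J_hat_def plane_integral_def)
      have intc: "integrable lborel (\<lambda>y. cdot e (J y))"
        by (rule adm_integrable[OF adm, where C=Ce]) (auto simp: Ce_def norm_cdot_le)
      show "integrable lborel (J_hat x0 l m e J)"
        unfolding Jh by (rule fubini_frame(1)[OF fr intc])
      show "\<forall>k. cdot e (far_field eps mu x0 k J) = c k * (LINT \<alpha>|lborel. exp (- \<i> * complex_of_real ((-k) * \<alpha>)) * J_hat x0 l m e J \<alpha>)"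
      proof
        fix k :: real
        define f where "f y = exp (- \<i> * complex_of_real (k * (x0 \<bullet> y))) * cdot e (J y)" for y
        have fm: "f \<in> borel_measurable lborel" unfolding f_def by measurable
        have intf: "integrable lborel f"
          by (rule adm_integrable[OF adm fm, where C=Ce]) (auto simp: f_def Ce_def norm_mult norm_exp_mi norm_cdot_le)
        have intj: "integrable lborel (\<lambda>y. exp (- \<i> * complex_of_real (k * (x0 \<bullet> y))) * (J y $ j))" for j
          by (rule adm_integrable[OF adm, where C=1]) (auto simp: norm_mult norm_exp_mi Finite_Cartesian_Product.norm_nth_le)
        have "cdot e (far_field eps mu x0 k J) = c k * integral\<^sup>L lborel f"
          unfolding c_def f_def by (rule cdot_far_field[OF ex intj])
        also have "integral\<^sup>L lborel f = (LINT \<alpha>|lborel. LINT u|(lborel :: (real^2) measure). f ((- \<alpha>) *\<^sub>R x0 + (u$1) *\<^sub>R l + (u$2) *\<^sub>R m))"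
          by (rule fubini_frame(2)[OF fr intf])
        also have "\<dots> = (LINT \<alpha>|lborel. exp (- \<i> * complex_of_real ((-k) * \<alpha>)) * J_hat x0 l m e J \<alpha>)"
          by (simp add: f_def Phi Phi2 Jh)
        finally show "cdot e (far_field eps mu x0 k J) = c k * (LINT \<alpha>|lborel. exp (- \<i> * complex_of_real ((-k) * \<alpha>)) * J_hat x0 l m e J \<alpha>)" .
      qed
    qed
    note K1 = key[OF adm1] and K2 = key[OF adm2]
    define H where "H \<alpha> = J_hat x0 l m e J1 \<alpha> - J_hat x0 l m e J2 \<alpha>" for \<alpha>
    have intH: "integrable lborel H" unfolding H_def using K1 K2 by auto
    obtain R1 where R1: "\<And>\<alpha>. R1 < \<bar>\<alpha>\<bar> \<Longrightarrow> - \<alpha> < I1 \<or> S1 < - \<alpha>" using SF1(2) by blast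
    obtain R2 where R2: "\<And>\<alpha>. R2 < \<bar>\<alpha>\<bar> \<Longrightarrow> - \<alpha> < I2 \<or> S2 < - \<alpha>" using SF2(2) by blast
    have suppH: "H \<alpha> = 0" if "max R1 R2 < \<bar>\<alpha>\<bar>" for \<alpha>
      using van1[OF R1] van2[OF R2] that unfolding H_def by auto
    have F0: "(CLINT \<alpha>|lborel. exp (- \<i> * complex_of_real (k' * \<alpha>)) * H \<alpha>) = 0"
      if "- kmax < k'" "k' < - kmin" for k'
    proof -
      define k where "k = - k'"
      have kin: "k \<in> {kmin<..<kmax}" using that unfolding k_def by auto
      have ck: "c k \<noteq> 0" using kin kmin eps mu unfolding c_def by auto
      have "c k * (LINT \<alpha>|lborel. exp (- \<i> * complex_of_real ((-k) * \<alpha>)) * J_hat x0 l m e J1 \<alpha>)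
          = c k * (LINT \<alpha>|lborel. exp (- \<i> * complex_of_real ((-k) * \<alpha>)) * J_hat x0 l m e J2 \<alpha>)"
        using ff kin K1 K2 by metis
      then have eq: "(LINT \<alpha>|lborel. exp (- \<i> * complex_of_real (k' * \<alpha>)) * J_hat x0 l m e J1 \<alpha>)
          = (LINT \<alpha>|lborel. exp (- \<i> * complex_of_real (k' * \<alpha>)) * J_hat x0 l m e J2 \<alpha>)"
        using ck unfolding k_def by simp
      have ib: "integrable lborel (\<lambda>\<alpha>. exp (- \<i> * complex_of_real (k' * \<alpha>)) * J_hat x0 l m e J \<alpha>)"
        if "integrable lborel (J_hat x0 l m e J)" for J
        by (rule Bochner_Integration.integrable_bound[where f="J_hat x0 l m e J"])
           (use that in \<open>auto simp: norm_mult norm_exp_mi\<close>)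
      have "(CLINT \<alpha>|lborel. exp (- \<i> * complex_of_real (k' * \<alpha>)) * H \<alpha>)
          = (LINT \<alpha>|lborel. exp (- \<i> * complex_of_real (k' * \<alpha>)) * J_hat x0 l m e J1 \<alpha>)
          - (LINT \<alpha>|lborel. exp (- \<i> * complex_of_real (k' * \<alpha>)) * J_hat x0 l m e J2 \<alpha>)"
        unfolding H_def right_diff_distrib
        by (rule Bochner_Integration.integral_diff[OF ib ib]) (use K1 K2 in auto)
      then show ?thesis using eq by simp
    qed
    have "AE \<alpha> in lborel. H \<alpha> = 0"
      by (rule fourier_interval_zero[where R="max R1 R2", OF intH suppH _ F0]) (use kk in auto)
    then show ?thesis unfolding H_def by eventually_elim simp
  qed
  have "I1 = I2 \<and> S1 = S2"
    by (rule strip_from_ae[OF SF1(1) SF2(1) van1 van2 ae null1' null2'])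
  then show ?thesis unfolding strip_hull_def I1_def I2_def S1_def S2_def by simp
qed

end
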